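(* Let $q=27/25$ and $\Delta=6$. The function $t\mapsto \big(g_2(e^t)\big)^q$ is concave on the interval $\big[\ln(3/4),\ \ln\big(1-\frac{1}{(2^{\Delta-1}+1)^2}\big)\big]$.
   Context: $h(t)=(1-t)\left[\psi-\left(\frac{t}{1-t}\right)^{\chi}\right]$ with $\psi=13/10$, $\chi=1/2$, and $g_2(y)=\frac{1-y}{y}\,h\big((1-y)^{1/2}\big)$. *)

theory Defs
  imports "HOL-Analysis.Analysis"
begin

definition psi :: real where "psi = 13/10"
definition chi :: real where "chi = 1/2"

definition h :: "real \<Rightarrow> real" where
  "h t = (1 - t) * (psi - (t / (1 - t)) powr chi)"

definition g2 :: "real \<Rightarrow> real" where
  "g2 y = (1 - y) / y * h ((1 - y) powr (1/2))"

end

theory Submission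
  imports Defs
begin

definition Pp :: "real \<Rightarrow> real" where "Pp r = (2704)*r^0 + (-13325)*r^1 + (-8488)*r^2 + (-17160)*r^3 + (-37516)*r^4 + (24505)*r^5 + (-31850)*r^6 + (35880)*r^7 + (3600)*r^8 + (-6500)*r^9 + (5400)*r^10"

lemma Pp_nonpos: assumes "22/125 \<le> r" "r \<le> 1" shows "Pp r \<le> 0"
proof -
  have e: "- Pp r = (1128469091364026636166/5006478649914718868173658847808837890625)*(125*r-22)^0*(125-125*r)^10 + (186636967372926693543/1602073167972710037815570831298828125)*(125*r-22)^1*(125-125*r)^9 + (370761557071246537661/320414633594542007563114166259765625)*(125*r-22)^2*(125-125*r)^8 + (67278561351924953932/12816585343781680302524566650390625)*(125*r-22)^3*(125-125*r)^7 + (1452442213256482462/102532682750253442420196533203125)*(125*r-22)^4*(125-125*r)^6 + (20419276022007251/820261462002027539361572265625)*(125*r-22)^5*(125-125*r)^5 + (961694353119771/32810458480081101574462890625)*(125*r-22)^6*(125-125*r)^4 + (6000805962302/262483667840648812595703125)*(125*r-22)^7*(125-125*r)^3 + (23500774506/2099869342725190500765625)*(125*r-22)^8*(125-125*r)^2 + (10173324/3359790948360304801225)*(125*r-22)^9*(125-125*r)^1 + (42750/134391637934412192049)*(125*r-22)^10*(125-125*r)^0"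
    unfolding Pp_def by algebra
  have "0 \<le> (1128469091364026636166/5006478649914718868173658847808837890625)*(125*r-22)^0*(125-125*r)^10 + (186636967372926693543/1602073167972710037815570831298828125)*(125*r-22)^1*(125-125*r)^9 + (370761557071246537661/320414633594542007563114166259765625)*(125*r-22)^2*(125-125*r)^8 + (67278561351924953932/12816585343781680302524566650390625)*(125*r-22)^3*(125-125*r)^7 + (1452442213256482462/102532682750253442420196533203125)*(125*r-22)^4*(125-125*r)^6 + (20419276022007251/820261462002027539361572265625)*(125*r-22)^5*(125-125*r)^5 + (961694353119771/32810458480081101574462890625)*(125*r-22)^6*(125-125*r)^4 + (6000805962302/262483667840648812595703125)*(125*r-22)^7*(125-125*r)^3 + (23500774506/2099869342725190500765625)*(125*r-22)^8*(125-125*r)^2 + (10173324/3359790948360304801225)*(125*r-22)^9*(125-125*r)^1 + (42750/134391637934412192049)*(125*r-22)^10*(125-125*r)^0"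
    using assms by (intro add_nonneg_nonneg mult_nonneg_nonneg zero_le_power) auto
  then show ?thesis using e by linarith
qed

definition Dn :: "real \<Rightarrow> real" where "Dn r = (1+r^2)*(1+2*r^2)"
definition Gm :: "real \<Rightarrow> real" where "Gm r = r^4*(13/10 - r)/Dn r"
definition Kp :: "real \<Rightarrow> real" where
  "Kp r = (26/5-5*r)*(1+3*r^2+2*r^4) - r^2*(13/10-r)*(6+8*r^2)"
definition Kp' :: "real \<Rightarrow> real" where
  "Kp' r = -5*(1+3*r^2+2*r^4) + (26/5-5*r)*(6*r+8*r^3) - ((2*r*(13/10) - 3*r^2)*(6+8*r^2) + r^2*(13/10-r)*(16*r))"
definition U :: "real \<Rightarrow> real" where "U r = - Kp r/(4*Dn r)"
definition rho :: "real \<Rightarrow> real" where "rho r = - Dn r / (4*r^3)"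
definition R :: "real \<Rightarrow> real" where "R t = sqrt (sqrt (1 - exp t) / (1 - sqrt (1 - exp t)))"
definition Dd :: "real \<Rightarrow> real" where "Dd r = (27/25) * Gm r powr (2/25) * U r"

lemma Dn_pos: "Dn r > 0" unfolding Dn_def by (intro mult_pos_pos) (auto intro: add_pos_nonneg)

lemma Dn_deriv: "(Dn has_real_derivative 6*r+8*r^3) (at r)"
  unfolding Dn_def[abs_def]
  apply (rule derivative_eq_intros refl)+
  by (simp add: eval_nat_numeral; algebra)

lemma Kp_deriv: "(Kp has_real_derivative Kp' r) (at r)"
  unfolding Kp_def[abs_def] Kp'_def
  apply (rule derivative_eq_intros refl)+
  by (simp add: eval_nat_numeral; algebra)

lemma N_deriv: "((\<lambda>r. r^4*(13/10 - r)) has_real_derivative 4*r^3*(13/10-r) - r^4) (at r)"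
  apply (rule derivative_eq_intros refl)+
  by (simp add: eval_nat_numeral; algebra)

lemma Gm_deriv: "(Gm has_real_derivative r^3*Kp r/(Dn r)^2) (at r)"
proof -
  have "Dn r \<noteq> 0" using Dn_pos[of r] by simp
  from DERIV_divide[OF N_deriv Dn_deriv this]
  have d: "(Gm has_real_derivative ((4*r^3*(13/10-r) - r^4) * Dn r - r^4*(13/10-r)*(6*r+8*r^3))/(Dn r * Dn r)) (at r)"
    unfolding Gm_def[abs_def] .
  have e: "(4*r^3*(13/10-r) - r^4) * Dn r - r^4*(13/10-r)*(6*r+8*r^3) = r^3*Kp r"
    unfolding Kp_def Dn_def by algebra
  show ?thesis using d unfolding e by (simp add: power2_eq_square)
qed

lemma U_deriv: "(U has_real_derivative -(Kp' r * Dn r - Kp r * (6*r+8*r^3))/(4*(Dn r)^2)) (at r)"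
proof -
  have "Dn r \<noteq> 0" using Dn_pos[of r] by simp
  then have "4 * Dn r \<noteq> 0" by simp
  from DERIV_divide[OF Kp_deriv DERIV_cmult[OF Dn_deriv, of 4] this]
  have d: "((\<lambda>r. Kp r / (4 * Dn r)) has_real_derivative (Kp' r * (4 * Dn r) - Kp r * (4 * (6*r+8*r^3))) / (4 * Dn r * (4 * Dn r))) (at r)" .
  have uu: "U = (\<lambda>r. - (Kp r / (4 * Dn r)))" unfolding U_def[abs_def] by simp
  from DERIV_minus[OF d] show ?thesis unfolding uu
    apply (rule DERIV_cong) using \<open>Dn r \<noteq> 0\<close> by (simp add: field_simps power2_eq_square)
qed

lemma E_ident:
  assumes "r \<noteq> 0"
  shows "(2/25) * (r^3*Kp r/(Dn r)^2) * U r + Gm r * (-(Kp' r * Dn r - Kp r * (6*r+8*r^3))/(4*(Dn r)^2))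
     = - (r^3/(4*(Dn r)^3)) * (Pp r / 1250)"
proof -
  have p: "Pp r = 1250*((2/25)*(Kp r)^2 + r*(13/10-r)*(Kp' r*Dn r - Kp r*(6*r+8*r^3)))"
    unfolding Pp_def Kp_def Kp'_def Dn_def by algebra
  have "Dn r \<noteq> 0" using Dn_pos[of r] by simp
  then show ?thesis unfolding p U_def Gm_def using assms
    by (simp add: field_simps power2_eq_square power3_eq_cube eval_nat_numeral)
qed

lemma Gm_pos: "0 < r \<Longrightarrow> r < 13/10 \<Longrightarrow> 0 < Gm r"
  unfolding Gm_def using Dn_pos[of r] by simp

lemma Dd_deriv_nonneg:
  assumes "22/125 \<le> r" "r \<le> 1"
  shows "\<exists>y. DERIV Dd r :> y \<and> 0 \<le> y"
proof -
  have r0: "0 < r" "r < 13/10" using assms by auto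
  have g: "0 < Gm r" using Gm_pos r0 by blast
  have dp: "((\<lambda>r. Gm r powr (2/25)) has_real_derivative (2/25) * Gm r powr (2/25 - 1) * (r^3*Kp r/(Dn r)^2)) (at r)"
    using DERIV_chain2[OF has_real_derivative_powr[OF g, of "2/25"] Gm_deriv[of r]]
    by (simp add: mult.assoc)
  have d: "DERIV Dd r :> (27/25) * ((2/25) * Gm r powr (2/25 - 1) * (r^3*Kp r/(Dn r)^2) * U r
        + Gm r powr (2/25) * (-(Kp' r * Dn r - Kp r * (6*r+8*r^3))/(4*(Dn r)^2)))"
  proof -
    have dd: "Dd = (\<lambda>r. (27/25) * (Gm r powr (2/25) * U r))" by (auto simp: Dd_def[abs_def] mult.assoc)
    show ?thesis unfolding dd
      by (rule DERIV_cong[OF DERIV_cmult[OF DERIV_mult[OF dp U_deriv], of "27/25"]]) (simp add: algebra_simps)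
  qed
  have pw: "Gm r powr (2/25 - 1) = Gm r powr (2/25) / Gm r"
    using g powr_diff[of "Gm r" "2/25" 1] by simp
  have "(27/25) * ((2/25) * Gm r powr (2/25 - 1) * (r^3*Kp r/(Dn r)^2) * U r
        + Gm r powr (2/25) * (-(Kp' r * Dn r - Kp r * (6*r+8*r^3))/(4*(Dn r)^2)))
      = (27/25) * (Gm r powr (2/25) / Gm r) * ((2/25) * (r^3*Kp r/(Dn r)^2) * U r + Gm r * (-(Kp' r * Dn r - Kp r * (6*r+8*r^3))/(4*(Dn r)^2)))"
    unfolding pw using g by (simp add: field_simps)
  also have "\<dots> = (27/25) * (Gm r powr (2/25) / Gm r) * (- (r^3/(4*(Dn r)^3)) * (Pp r / 1250))"
    using E_ident[of r] r0 by simp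
  also have "\<dots> \<ge> 0"
  proof -
    have "Pp r \<le> 0" using Pp_nonpos assms by blast
    moreover have "0 \<le> r^3" using r0 by simp
    ultimately have a: "r^3 * Pp r \<le> 0" by (rule mult_nonneg_nonpos[rotated])
    have b: "0 < 5000 * (Dn r)^3" using Dn_pos[of r] by simp
    have c: "- (r^3/(4*(Dn r)^3)) * (Pp r / 1250) = - (r^3 * Pp r) / (5000 * (Dn r)^3)"
      by simp
    have "0 \<le> - (r^3/(4*(Dn r)^3)) * (Pp r / 1250)"
      unfolding c using a b by (intro divide_nonneg_pos) auto
    moreover have "0 \<le> (27/25) * (Gm r powr (2/25) / Gm r)" using g by simp
    ultimately show ?thesis using mult_nonneg_nonneg by blast
  qed
  finally show ?thesis using d by blast
qed

lemma Dd_mono: "22/125 \<le> a \<Longrightarrow> a \<le> b \<Longrightarrow> b \<le> 1 \<Longrightarrow> Dd a \<le> Dd b"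
  by (rule DERIV_nonneg_imp_nondecreasing[where f=Dd]) (auto intro!: Dd_deriv_nonneg)


lemma s_facts:
  assumes "t < 0"
  shows "0 < sqrt (1 - exp t)" "sqrt (1 - exp t) < 1" "(sqrt (1 - exp t))^2 = 1 - exp t"
proof -
  have e: "exp t < 1" "0 < exp t" using assms by auto
  then show "0 < sqrt (1 - exp t)" by simp
  show "sqrt (1 - exp t) < 1" using e by simp
  show "(sqrt (1 - exp t))^2 = 1 - exp t" using e by simp
qed

lemma g2_eq:
  assumes "t < 0"
  shows "g2 (exp t) = Gm (R t)"
proof -
  define s where "s = sqrt (1 - exp t)"
  have s0: "0 < s" "s < 1" and ss: "s^2 = 1 - exp t" using s_facts[OF assms] by (auto simp: s_def)
  have ey: "exp t = 1 - s^2" using ss by simp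
  define r where "r = sqrt (s/(1-s))"
  have Rr: "R t = r" by (simp add: R_def r_def s_def)
  have q0: "0 \<le> s/(1-s)" using s0 by simp
  have r2: "r^2 = s/(1-s)" using q0 by (simp add: r_def)
  have hs: "(1 - exp t) powr (1/2) = s" using s0 ss by (simp add: s_def powr_half_sqrt)
  have hr: "(s/(1-s)) powr (1/2) = r" using q0 by (simp add: r_def powr_half_sqrt)
  have "g2 (exp t) = (1 - exp t) / exp t * ((1 - s) * (13/10 - r))"
    unfolding g2_def h_def psi_def chi_def hs hr by simp
  also have "\<dots> = s^2 / (1 - s^2) * ((1 - s) * (13/10 - r))" unfolding ey by simp
  also have "\<dots> = Gm r"
  proof -
    have r4: "r^4 = (s/(1-s))^2" using r2 by (metis power_mult numeral_Bit0 mult_2_right power_add)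
    have "Gm r = (s/(1-s))^2*(13/10 - r)/((1+s/(1-s))*(1+2*(s/(1-s))))"
      unfolding Gm_def Dn_def r4 r2 ..
    also have "\<dots> = s^2 * (13/10 - r) / (1 + s)"
    proof -
      have n1: "1 - s \<noteq> 0" "1 + s \<noteq> 0" using s0 by auto
      have d1: "1+s/(1-s) = 1/(1-s)" using n1 by (simp add: field_simps)
      have d2: "1+2*(s/(1-s)) = (1+s)/(1-s)" using n1 by (simp add: field_simps)
      have e1: "(s/(1-s))^2 = s^2/(1-s)^2" by (simp add: power_divide)
      have e2: "(1/(1-s))*((1+s)/(1-s)) = (1+s)/(1-s)^2" by (simp add: power2_eq_square)
      have nz: "(1-s)^2 \<noteq> 0" using n1 by simp
      show ?thesis unfolding d1 d2 e1 e2 using nz n1 by (simp add: divide_simps)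
    qed
    also have "\<dots> = s^2 / (1 - s^2) * ((1 - s) * (13/10 - r))"
    proof -
      have ss1: "s * s < 1 * 1" using s0 by (intro mult_strict_mono) auto
      have n1: "1 - s \<noteq> 0" "1 + s \<noteq> 0" "1 - s^2 \<noteq> 0" "1 - s * s \<noteq> 0" using s0 ss1 by (auto simp: power2_eq_square)
      have fac: "1 - s^2 = (1-s)*(1+s)" by (simp add: algebra_simps power2_eq_square)
      show ?thesis unfolding fac using n1 by (simp add: field_simps)
    qed
    finally show ?thesis by simp
  qed
  finally show ?thesis by (simp add: Rr)
qed

lemma R_deriv:
  assumes "t < 0"
  shows "(R has_real_derivative rho (R t)) (at t)"
proof -
  define s where "s = sqrt (1 - exp t)"
  have s0: "0 < s" "s < 1" and ss: "s^2 = 1 - exp t" using s_facts[OF assms] by (auto simp: s_def)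
  define r where "r = sqrt (s/(1-s))"
  have Rr: "R t = r" by (simp add: R_def r_def s_def)
  have q0: "0 < s/(1-s)" using s0 by simp
  have r0: "0 < r" using q0 by (simp add: r_def)
  have r2: "r^2 = s/(1-s)" using q0 by (simp add: r_def)
  have e1: "0 < 1 - exp t" using assms by simp
  have ds: "((\<lambda>t. sqrt (1 - exp t)) has_real_derivative inverse (sqrt (1 - exp t)) / 2 * (- exp t)) (at t)"
    by (rule DERIV_chain2[where f=sqrt and g="\<lambda>t. 1 - exp t", OF DERIV_real_sqrt[OF e1]]) (auto intro!: derivative_eq_intros)
  then have ds': "((\<lambda>t. sqrt (1 - exp t)) has_real_derivative - (1 - s^2) / (2* s)) (at t)"
    using ss s0 by (simp add: s_def field_simps)
  have "1 - s \<noteq> 0" using s0 by simp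
  have dq: "((\<lambda>t. sqrt (1 - exp t) / (1 - sqrt (1 - exp t))) has_real_derivative
        ((- (1 - s^2) / (2* s)) * (1 - s) - s * (- (- (1 - s^2) / (2* s)))) / ((1 - s) * (1 - s))) (at t)"
    using DERIV_divide[OF ds' DERIV_diff[OF DERIV_const ds'], of 1] \<open>1 - s \<noteq> 0\<close>
    by (simp add: s_def)
  have dR: "(R has_real_derivative inverse (sqrt (s/(1-s))) / 2 *
        (((- (1 - s^2) / (2* s)) * (1 - s) - s * (- (- (1 - s^2) / (2* s)))) / ((1 - s) * (1 - s)))) (at t)"
    unfolding R_def[abs_def] using DERIV_chain2[where f=sqrt, OF DERIV_real_sqrt[OF q0, unfolded s_def] dq] by (simp add: s_def)
  have "inverse (sqrt (s/(1-s))) / 2 *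
        (((- (1 - s^2) / (2* s)) * (1 - s) - s * (- (- (1 - s^2) / (2* s)))) / ((1 - s) * (1 - s)))
      = - (1 + s) / (4 * r * s * (1 - s))"
  proof -
    define D where "D = - (1 - s^2) / (2* s)"
    have num: "(- (1 - s^2) / (2* s)) * (1 - s) - s * (- (- (1 - s^2) / (2* s))) = D"
      unfolding D_def by (simp add: algebra_simps, simp add: add_divide_distrib[symmetric] algebra_simps)
    have fac: "1 - s^2 = (1-s)*(1+s)" by (simp add: algebra_simps power2_eq_square)
    have "inverse (sqrt (s/(1-s))) / 2 * (D / ((1 - s) * (1 - s))) = - (1 + s) / (4 * r * s * (1 - s))"
    proof -
      have n: "1 - s \<noteq> 0" "r \<noteq> 0" "s \<noteq> 0" using s0 r0 by auto
      show ?thesis unfolding D_def fac r_def[symmetric] using n by (simp add: divide_simps)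
    qed
    then show ?thesis unfolding num .
  qed
  also have "\<dots> = rho r"
  proof -
    have r3: "r^3 = r * (s/(1-s))" using r2 by (simp add: power3_eq_cube power2_eq_square)
    have n: "1 - s \<noteq> 0" "r \<noteq> 0" "s \<noteq> 0" using s0 r0 by auto
    have d1: "1+s/(1-s) = 1/(1-s)" using n by (simp add: field_simps)
    have d2: "1+2*(s/(1-s)) = (1+s)/(1-s)" using n by (simp add: field_simps)
    show ?thesis unfolding rho_def Dn_def r3 r2 d1 d2 using n
      by (simp add: divide_simps)
  qed
  finally show ?thesis using dR Rr by simp
qed

lemma F_deriv:
  assumes "t < 0" "0 < R t" "R t < 13/10"
  shows "((\<lambda>t. g2 (exp t) powr (27/25)) has_real_derivative Dd (R t)) (at t)"
proof -
  have g: "0 < Gm (R t)" using Gm_pos assms by blast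
  have dG: "((\<lambda>t. Gm (R t)) has_real_derivative U (R t)) (at t)"
  proof -
    have "(R t)^3 * Kp (R t) / (Dn (R t))^2 * rho (R t) = U (R t)"
      using assms Dn_pos[of "R t"] by (simp add: rho_def U_def field_simps power2_eq_square power3_eq_cube)
    then show ?thesis using DERIV_chain2[where f=Gm and g=R, OF Gm_deriv R_deriv[OF assms(1)]] by simp
  qed
  have d: "((\<lambda>t. Gm (R t) powr (27/25)) has_real_derivative Dd (R t)) (at t)"
    using DERIV_chain2[where f="\<lambda>z. z powr (27/25)" and g="\<lambda>t. Gm (R t)", OF has_real_derivative_powr[OF g, of "27/25"] dG]
    by (simp add: Dd_def mult.assoc)
  have ev: "eventually (\<lambda>x. g2 (exp x) powr (27/25) = Gm (R x) powr (27/25)) (nhds t)"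
    using eventually_nhds_in_open[of "{..<0}" t] assms(1)
    by (auto elim!: eventually_mono simp: g2_eq)
  show ?thesis using d by (subst DERIV_cong_ev[OF refl ev refl])
qed

lemma R_bounds:
  assumes "3/4 \<le> exp t" "exp t \<le> 1088/1089"
  shows "22/125 \<le> R t" "R t \<le> 1"
proof -
  define s where "s = sqrt (1 - exp t)"
  have "(1088/1089::real) < 1" by simp
  then have "exp t < 1" using assms(2) by linarith
  then have t0: "t < 0" by simp
  have s0: "0 < s" "s < 1" and ss: "s^2 = 1 - exp t" using s_facts[OF t0] by (auto simp: s_def)
  have sl: "1/33 \<le> s" unfolding s_def using assms by (intro real_le_rsqrt) (simp add: power2_eq_square)
  have su: "s \<le> 1/2"
  proof (rule ccontr)
    assume "\<not> s \<le> 1/2"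
    then have "1/2 < s" by simp
    then have "(1/2)^2 < s^2" using power_strict_mono[of "1/2" s 2] by simp
    then show False using ss assms by (simp add: power2_eq_square)
  qed
  have Rr: "R t = sqrt (s/(1-s))" by (simp add: R_def s_def)
  have "(22/125)^2 \<le> s/(1-s)" using sl s0 by (simp add: field_simps)
  then show "22/125 \<le> R t" unfolding Rr by (rule real_le_rsqrt)
  have "s/(1-s) \<le> 1" using su s0 by (simp add: field_simps)
  then show "R t \<le> 1" unfolding Rr by simp
qed

lemma R_antimono:
  assumes "t1 \<le> t2" "t2 < 0"
  shows "R t2 \<le> R t1"
proof -
  have t1: "t1 < 0" using assms by simp
  define s1 where "s1 = sqrt (1 - exp t1)"
  define s2 where "s2 = sqrt (1 - exp t2)"
  have a: "0 < s1" "s1 < 1" using s_facts[OF t1] by (auto simp: s1_def)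
  have b: "0 < s2" "s2 < 1" using s_facts[OF assms(2)] by (auto simp: s2_def)
  have "s2 \<le> s1" unfolding s1_def s2_def using assms by simp
  then have "s2/(1-s2) \<le> s1/(1-s1)" using a b by (simp add: field_simps)
  then show ?thesis by (simp add: R_def s1_def[symmetric] s2_def[symmetric])
qed

theorem lemma47:
  fixes q :: real and \<Delta> :: nat
  assumes "q = 27/25" and "\<Delta> = 6"
  shows "concave_on {ln (3/4) .. ln (1 - 1 / (2 ^ (\<Delta> - 1) + 1)^2)}
           (\<lambda>t. (g2 (exp t)) powr q)"
proof -
  have iv: "ln (1 - 1 / (2 ^ (\<Delta> - 1) + 1)^2) = ln (1088/1089::real)" using assms(2) by simp
  let ?I = "{ln (3/4) .. ln (1088/1089::real)}"
  have inI: "3/4 \<le> exp t \<and> exp t \<le> 1088/1089 \<and> t < 0" if "t \<in> ?I" for t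
  proof -
    have a0: "ln (3/4) \<le> t" "t \<le> ln (1088/1089::real)" using that by auto
    have a: "exp (ln (3/4)) \<le> exp t" "exp t \<le> exp (ln (1088/1089::real))" using a0 by (simp_all only: exp_le_cancel_iff)
    have "exp (ln (3/4)) = (3/4::real)" "exp (ln (1088/1089)) = (1088/1089::real)" by simp_all
    then have "3/4 \<le> exp t" "exp t \<le> 1088/1089" using a by argo+
    moreover have "t < 0"
    proof -
      have "ln (1088/1089::real) < 0" by (rule ln_less_zero) simp_all
      then show ?thesis using a0 by linarith
    qed
    ultimately show ?thesis by simp
  qed
  have "convex_on ?I (\<lambda>t. - (g2 (exp t) powr (27/25)))"
  proof (rule convex_on_realI[where f' = "\<lambda>t. - Dd (R t)"])
    show "connected ?I" by simp
  next
    fix t assume "t \<in> ?I"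
    then have h: "3/4 \<le> exp t" "exp t \<le> 1088/1089" "t < 0" using inI by auto
    have "0 < R t" "R t < 13/10" using R_bounds[OF h(1,2)] by auto
    then show "((\<lambda>t. - (g2 (exp t) powr (27/25))) has_real_derivative - Dd (R t)) (at t)"
      using F_deriv[OF h(3)] by (intro DERIV_minus) auto
  next
    fix x y assume xy: "x \<in> ?I" "y \<in> ?I" "x \<le> y"
    then have hx: "3/4 \<le> exp x" "exp x \<le> 1088/1089" and hy: "3/4 \<le> exp y" "exp y \<le> 1088/1089" "y < 0"
      using inI by auto
    have "R y \<le> R x" using R_antimono[OF xy(3) hy(3)] .
    then have "Dd (R y) \<le> Dd (R x)" using R_bounds[OF hx] R_bounds[OF hy(1,2)] by (intro Dd_mono) auto
    then show "- Dd (R x) \<le> - Dd (R y)" by simp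
  qed
  then show ?thesis unfolding concave_on_def iv assms(1) .
qed

end
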